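(* Let $R$ be a $*$-ring and let $R[i]=\{a+bi \mid a,b\in R\}$, where $i$ commutes with every element of $R$ and $i^2=-1$, equipped with the involution $(a+bi)^*=a^*+b^*i$. Then $R[i]$ is strongly $J$-$*$-clean if and only if $R$ is strongly $J$-$*$-clean.
   Context: All rings are associative with identity. A $*$-ring is a ring $R$ with an involution $*$, i.e. a map $a\mapsto a^*$ with $(a+b)^*=a^*+b^*$, $(ab)^*=b^*a^*$, $(a^* )^*=a$. $J(R)$ denotes the Jacobson radical of $R$. A projection is an element $e$ with $e^2=e=e^*$. A $*$-ring $R$ is strongly $J$-$*$-clean if every $a\in R$ can be written $a=e+u$ with $e$ a projection, $u\in J(R)$ and $ae=ea$. *)

theory Defs
  imports Main
begin

definition is_involution :: "('a::ring_1 \<Rightarrow> 'a) \<Rightarrow> bool" where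
  "is_involution st \<longleftrightarrow>
     (\<forall>a b. st (a + b) = st a + st b) \<and>
     (\<forall>a b. st (a * b) = st b * st a) \<and>
     (\<forall>a. st (st a) = a)"

definition left_ideal :: "'a::ring_1 set \<Rightarrow> bool" where
  "left_ideal I \<longleftrightarrow> 0 \<in> I \<and> (\<forall>x\<in>I. \<forall>y\<in>I. x + y \<in> I) \<and> (\<forall>x\<in>I. - x \<in> I)
     \<and> (\<forall>r. \<forall>x\<in>I. r * x \<in> I)"

definition maximal_left_ideal :: "'a::ring_1 set \<Rightarrow> bool" where
  "maximal_left_ideal I \<longleftrightarrow> left_ideal I \<and> I \<noteq> UNIV \<and>
     (\<forall>K. left_ideal K \<and> I \<subseteq> K \<longrightarrow> K = I \<or> K = UNIV)"

definition jacobson :: "'a::ring_1 set" where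
  "jacobson = \<Inter> {I. maximal_left_ideal I}"

definition projection :: "('a::ring_1 \<Rightarrow> 'a) \<Rightarrow> 'a \<Rightarrow> bool" where
  "projection st e \<longleftrightarrow> e * e = e \<and> st e = e"

definition strongly_J_star_clean :: "('a::ring_1 \<Rightarrow> 'a) \<Rightarrow> bool" where
  "strongly_J_star_clean st \<longleftrightarrow>
     (\<forall>a. \<exists>e u. projection st e \<and> u \<in> jacobson \<and> a = e + u \<and> a * e = e * a)"

datatype 'a gi = GI (re: 'a) (im: 'a)

instantiation gi :: (ring_1) ring_1
begin
definition "0 = GI 0 0"
definition "1 = GI 1 0"
definition "x + y = GI (re x + re y) (im x + im y)"
definition "x - y = GI (re x - re y) (im x - im y)"
definition "- x = GI (- re x) (- im x)"
definition "x * y = GI (re x * re y - im x * im y) (re x * im y + im x * re y)"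
instance
proof
  fix a b c :: "'a gi"
  show "a * b * c = a * (b * c)"
    by (simp add: times_gi_def algebra_simps)
  show "(a + b) * c = a * c + b * c"
    by (simp add: times_gi_def plus_gi_def algebra_simps)
  show "a * (b + c) = a * b + a * c"
    by (simp add: times_gi_def plus_gi_def algebra_simps)
  show "a + b + c = a + (b + c)" by (simp add: plus_gi_def algebra_simps)
  show "a + b = b + a" by (simp add: plus_gi_def algebra_simps)
  show "0 + a = a" by (simp add: plus_gi_def zero_gi_def)
  show "- a + a = 0" by (simp add: plus_gi_def zero_gi_def uminus_gi_def)
  show "a - b = a + - b" by (simp add: plus_gi_def minus_gi_def uminus_gi_def)
  show "1 * a = a" by (simp add: times_gi_def one_gi_def)
  show "a * 1 = a" by (simp add: times_gi_def one_gi_def)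
  show "(0::'a gi) \<noteq> 1" by (simp add: zero_gi_def one_gi_def)
qed
end

definition gi_i :: "'a::ring_1 gi" where "gi_i = GI 0 1"

definition gi_star :: "('a::ring_1 \<Rightarrow> 'a) \<Rightarrow> 'a gi \<Rightarrow> 'a gi" where
  "gi_star st x = GI (st (re x)) (st (im x))"

end

theory Submission
  imports Defs
begin

lemma li_jac: "left_ideal (jacobson::'a::ring_1 set)"
  unfolding left_ideal_def
proof (intro conjI ballI allI)
  have L: "\<And>M. M \<in> {I. maximal_left_ideal I} \<Longrightarrow> left_ideal (M::'a set)"
    by (simp add: maximal_left_ideal_def)
  show "0 \<in> (jacobson::'a set)" unfolding jacobson_def using L unfolding left_ideal_def by blast
  show "\<And>x y. x \<in> (jacobson::'a set) \<Longrightarrow> y \<in> jacobson \<Longrightarrow> x + y \<in> jacobson"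
    unfolding jacobson_def using L unfolding left_ideal_def by (meson InterD InterI)
  show "\<And>x. x \<in> (jacobson::'a set) \<Longrightarrow> - x \<in> jacobson"
    unfolding jacobson_def using L unfolding left_ideal_def by (meson InterD InterI)
  show "\<And>r x. x \<in> (jacobson::'a set) \<Longrightarrow> r * x \<in> jacobson"
    unfolding jacobson_def using L unfolding left_ideal_def by (meson InterD InterI)
qed

lemma jac_add: "x \<in> jacobson \<Longrightarrow> y \<in> jacobson \<Longrightarrow> (x::'a::ring_1) + y \<in> jacobson"
  using li_jac unfolding left_ideal_def by blast
lemma jac_neg: "x \<in> jacobson \<Longrightarrow> - (x::'a::ring_1) \<in> jacobson"
  using li_jac unfolding left_ideal_def by blast
lemma jac_mult: "x \<in> jacobson \<Longrightarrow> r * (x::'a::ring_1) \<in> jacobson"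
  using li_jac unfolding left_ideal_def by blast
lemma jac_diff: "x \<in> jacobson \<Longrightarrow> y \<in> jacobson \<Longrightarrow> (x::'a::ring_1) - y \<in> jacobson"
  using jac_add[of x "-y"] jac_neg[of y] by simp
lemma jac_zero: "(0::'a::ring_1) \<in> jacobson"
  using li_jac unfolding left_ideal_def by blast

lemma li_one: "left_ideal (K::'a::ring_1 set) \<Longrightarrow> 1 \<in> K \<Longrightarrow> K = UNIV"
proof -
  assume a: "left_ideal K" "1 \<in> K"
  have "\<And>r. r * 1 \<in> K" using a unfolding left_ideal_def by blast
  then show "K = UNIV" by auto
qed

lemma union_li:
  fixes C :: "'a::ring_1 set set"
  assumes ne: "C \<noteq> {}" and L: "\<And>K. K \<in> C \<Longrightarrow> left_ideal K"
    and ch: "\<And>A B. A \<in> C \<Longrightarrow> B \<in> C \<Longrightarrow> A \<subseteq> B \<or> B \<subseteq> A"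
  shows "left_ideal (\<Union>C)"
  unfolding left_ideal_def
proof (intro conjI ballI allI)
  obtain K where "K \<in> C" using ne by blast
  then show "0 \<in> \<Union>C" using L[of K] unfolding left_ideal_def by blast
next
  fix x y assume "x \<in> \<Union>C" "y \<in> \<Union>C"
  then obtain A B where AB: "A \<in> C" "B \<in> C" "x \<in> A" "y \<in> B" by blast
  show "x + y \<in> \<Union>C"
  proof (cases "A \<subseteq> B")
    case True then have "x + y \<in> B" using AB L[of B] unfolding left_ideal_def by blast
    then show ?thesis using AB by blast
  next
    case False then have "B \<subseteq> A" using ch AB by blast
    then have "x + y \<in> A" using AB L[of A] unfolding left_ideal_def by blast
    then show ?thesis using AB by blast
  qed
next
  fix x assume "x \<in> \<Union>C"
  then obtain A where A: "A \<in> C" "x \<in> A" by blast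
  then have "- x \<in> A" using L[of A] unfolding left_ideal_def by blast
  then show "- x \<in> \<Union>C" using A by blast
next
  fix r x assume "x \<in> \<Union>C"
  then obtain A where A: "A \<in> C" "x \<in> A" by blast
  then have "r * x \<in> A" using L[of A] unfolding left_ideal_def by blast
  then show "r * x \<in> \<Union>C" using A by blast
qed

lemma exists_maximal:
  fixes I :: "'a::ring_1 set"
  assumes "left_ideal I" "1 \<notin> I"
  shows "\<exists>M. maximal_left_ideal M \<and> I \<subseteq> M"
proof -
  define S where "S = {K. left_ideal K \<and> I \<subseteq> K \<and> 1 \<notin> K}"
  have IS: "I \<in> S" using assms S_def by simp
  have "\<forall>C\<in>chains S. \<exists>U\<in>S. \<forall>X\<in>C. X \<subseteq> U"
  proof
    fix C assume C: "C \<in> chains S"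
    show "\<exists>U\<in>S. \<forall>X\<in>C. X \<subseteq> U"
    proof (cases "C = {}")
      case True then show ?thesis using IS by blast
    next
      case False
      have sub: "\<And>K. K \<in> C \<Longrightarrow> left_ideal K \<and> I \<subseteq> K \<and> 1 \<notin> K"
        using C unfolding chains_def S_def by blast
      have ch: "\<And>A B. A \<in> C \<Longrightarrow> B \<in> C \<Longrightarrow> A \<subseteq> B \<or> B \<subseteq> A"
        using C unfolding chains_def chain_subset_def by blast
      have "left_ideal (\<Union>C)" using union_li[OF False] sub ch by blast
      moreover have "I \<subseteq> \<Union>C" using False sub by blast
      moreover have "1 \<notin> \<Union>C" using sub by blast
      ultimately have "\<Union>C \<in> S" unfolding S_def by blast
      then show ?thesis by blast
    qed
  qed
  from Zorn_Lemma2[OF this] obtain M where M: "M \<in> S" "\<And>X. X \<in> S \<Longrightarrow> M \<subseteq> X \<Longrightarrow> X = M" by blast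
  have MS: "left_ideal M" "I \<subseteq> M" "1 \<notin> M" using M(1) unfolding S_def by auto
  have "maximal_left_ideal M"
    unfolding maximal_left_ideal_def
  proof (intro conjI allI impI)
    show "left_ideal M" using MS by blast
    show "M \<noteq> UNIV" using MS by blast
  next
    fix K assume K: "left_ideal K \<and> M \<subseteq> K"
    show "K = M \<or> K = UNIV"
    proof (cases "1 \<in> K")
      case True then show ?thesis using K li_one by blast
    next
      case False then have "K \<in> S" using K MS unfolding S_def by blast
      then show ?thesis using K M(2) by blast
    qed
  qed
  then show ?thesis using MS by blast
qed

lemma li_facts:
  assumes "left_ideal (M::'a::ring_1 set)"
  shows "0 \<in> M" "\<And>x y. x \<in> M \<Longrightarrow> y \<in> M \<Longrightarrow> x + y \<in> M"
    "\<And>x. x \<in> M \<Longrightarrow> - x \<in> M" "\<And>r x. x \<in> M \<Longrightarrow> r * x \<in> M"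
  using assms unfolding left_ideal_def by blast+

lemma max_facts:
  assumes "maximal_left_ideal (M::'a::ring_1 set)"
  shows "left_ideal M" "1 \<notin> M" "\<And>K. left_ideal K \<Longrightarrow> M \<subseteq> K \<Longrightarrow> K = M \<or> K = UNIV"
  using assms li_one unfolding maximal_left_ideal_def by blast+

lemma jac_char: "(x::'a::ring_1) \<in> jacobson \<longleftrightarrow> (\<forall>r. \<exists>s. s * (1 - r*x) = 1)"
proof
  assume x: "x \<in> jacobson"
  show "\<forall>r. \<exists>s. s * (1 - r*x) = 1"
  proof (rule ccontr)
    assume "\<not> (\<forall>r. \<exists>s. s * (1 - r*x) = 1)"
    then obtain r where r: "\<And>s. s * (1 - r*x) \<noteq> 1" by blast
    define I where "I = {y. \<exists>s. y = s * (1 - r*x)}"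
    have li: "left_ideal I"
      unfolding left_ideal_def
    proof (intro conjI ballI allI)
      have "0 = 0 * (1 - r*x)" by simp
      then show "0 \<in> I" unfolding I_def by blast
    next
      fix a b assume "a \<in> I" "b \<in> I"
      then obtain s1 s2 where "a = s1 * (1 - r*x)" "b = s2 * (1 - r*x)" unfolding I_def by blast
      then have "a + b = (s1 + s2) * (1 - r*x)" by (simp add: distrib_right)
      then show "a + b \<in> I" unfolding I_def by blast
    next
      fix a assume "a \<in> I"
      then obtain s1 where "a = s1 * (1 - r*x)" unfolding I_def by blast
      then have "- a = (- s1) * (1 - r*x)" by simp
      then show "- a \<in> I" unfolding I_def by blast
    next
      fix c a assume "a \<in> I"
      then obtain s1 where "a = s1 * (1 - r*x)" unfolding I_def by blast
      then have "c * a = (c * s1) * (1 - r*x)" by (simp add: mult.assoc)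
      then show "c * a \<in> I" unfolding I_def by blast
    qed
    have "1 \<notin> I" using r unfolding I_def by force
    then obtain M where M: "maximal_left_ideal M" "I \<subseteq> M" using exists_maximal li by blast
    note MF = max_facts[OF M(1)]
    note LF = li_facts[OF MF(1)]
    have "x \<in> M" using x M(1) unfolding jacobson_def by blast
    then have "r * x \<in> M" using LF(4) by blast
    moreover have "1 - r*x \<in> I" unfolding I_def by (metis (mono_tags, lifting) mem_Collect_eq mult_1)
    then have "1 - r*x \<in> M" using M(2) by blast
    ultimately have "(1 - r*x) + r * x \<in> M" using LF(2) by blast
    then have "1 \<in> M" by simp
    then show False using MF(2) by blast
  qed
next
  assume H: "\<forall>r. \<exists>s. s * (1 - r*x) = 1"
  show "x \<in> jacobson"
    unfolding jacobson_def
  proof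
    fix M :: "'a set" assume "M \<in> {I. maximal_left_ideal I}"
    then have M: "maximal_left_ideal M" by simp
    note MF = max_facts[OF M]
    note LF = li_facts[OF MF(1)]
    show "x \<in> M"
    proof (rule ccontr)
      assume xM: "x \<notin> M"
      define K where "K = {y. \<exists>m\<in>M. \<exists>r. y = m + r*x}"
      have liK: "left_ideal K"
        unfolding left_ideal_def
      proof (intro conjI ballI allI)
        have "0 = 0 + 0 * x" by simp
        then show "0 \<in> K" unfolding K_def using LF(1) by blast
      next
        fix a b assume "a \<in> K" "b \<in> K"
        then obtain m1 r1 m2 r2 where h: "m1 \<in> M" "m2 \<in> M" "a = m1 + r1*x" "b = m2 + r2*x"
          unfolding K_def by blast
        then have "a + b = (m1 + m2) + (r1 + r2) * x" by (simp add: algebra_simps)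
        moreover have "m1 + m2 \<in> M" using h LF(2) by blast
        ultimately show "a + b \<in> K" unfolding K_def by blast
      next
        fix a assume "a \<in> K"
        then obtain m1 r1 where h: "m1 \<in> M" "a = m1 + r1*x" unfolding K_def by blast
        then have "- a = (- m1) + (- r1) * x" by (simp add: algebra_simps)
        moreover have "- m1 \<in> M" using h LF(3) by blast
        ultimately show "- a \<in> K" unfolding K_def by blast
      next
        fix c a assume "a \<in> K"
        then obtain m1 r1 where h: "m1 \<in> M" "a = m1 + r1*x" unfolding K_def by blast
        then have "c * a = (c * m1) + (c * r1) * x" by (simp add: algebra_simps)
        moreover have "c * m1 \<in> M" using h LF(4) by blast
        ultimately show "c * a \<in> K" unfolding K_def by blast
      qed
      have "M \<subseteq> K"
      proof
        fix m assume "m \<in> M"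
        moreover have "m = m + 0 * x" by simp
        ultimately show "m \<in> K" unfolding K_def by blast
      qed
      moreover have "x \<in> K"
      proof -
        have "x = 0 + 1 * x" by simp
        then show ?thesis unfolding K_def using LF(1) by blast
      qed
      ultimately have "K = M \<or> K = UNIV" using MF(3) liK by blast
      then have "K = UNIV" using xM \<open>x \<in> K\<close> by blast
      then have "1 \<in> K" by simp
      then obtain m r where mr: "m \<in> M" "1 = m + r*x" unfolding K_def by blast
      then have "m = 1 - r*x" by (simp add: algebra_simps)
      then obtain s where "s * m = 1" using H by blast
      then have "1 \<in> M" using mr LF(4) by metis
      then show False using MF(2) by blast
    qed
  qed
qed


lemma jac_linv: "(x::'a::ring_1) \<in> jacobson \<Longrightarrow> \<exists>s. s * (1 - r*x) = 1"
  using jac_char by blast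

lemma jac_idem_eq:
  fixes e f :: "'a::ring_1"
  assumes e: "e*e = e" and f: "f*f = f" and c: "e*f = f*e" and J: "e - f \<in> jacobson"
  shows "e = f"
proof -
  define w where "w = e - f"
  have ww: "w*w = e + f - 2*(e*f)"
    unfolding w_def by (simp add: algebra_simps e f c mult_2)
  have e2: "e*(e*f) = e*f" by (metis e mult.assoc)
  have f2: "f*(e*f) = e*f" by (metis f c mult.assoc)
  have f3: "f*(f*e) = f*e" by (metis f mult.assoc)
  have e3: "e*(f*e) = f*e" by (metis e c mult.assoc)
  have www: "w*w*w = w"
    unfolding ww unfolding w_def by (simp add: algebra_simps e f c e2 f2 f3 e3 mult_2)
  obtain s where s: "s * (1 - w*w) = 1" using jac_linv[of w w] J unfolding w_def by blast
  have "w = s * (1 - w*w) * w" using s by simp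
  also have "\<dots> = s * (w - w*w*w)" by (simp add: algebra_simps)
  also have "\<dots> = 0" using www by simp
  finally show ?thesis unfolding w_def by simp
qed

lemma st_basic:
  assumes "is_involution st"
  shows "st 0 = 0" "st 1 = 1" "\<And>x. st (- x) = - st x" "\<And>x y. st (x - y) = st x - st y"
    "\<And>x y. st (x + y) = st x + st y" "\<And>x y. st (x * y) = st y * st x" "\<And>x. st (st x) = x"
proof -
  have A: "\<And>x y. st (x + y) = st x + st y" and M: "\<And>x y. st (x * y) = st y * st x"
    and I: "\<And>x. st (st x) = x" using assms unfolding is_involution_def by auto
  show Z: "st 0 = 0" using A[of 0 0] by simp
  have "st (st 1 * 1) = st 1 * st (st 1)" using M by blast
  then show "st 1 = 1" using I by simp
  show N: "\<And>x. st (- x) = - st x" using A Z by (metis add.right_inverse minus_unique)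
  show "\<And>x y. st (x - y) = st x - st y" using A N by (metis diff_conv_add_uminus)
  show "\<And>x y. st (x + y) = st x + st y" "\<And>x y. st (x * y) = st y * st x" "\<And>x. st (st x) = x"
    using A M I by auto
qed

lemma clean_decomp:
  fixes st :: "'a::ring_1 \<Rightarrow> 'a"
  assumes "strongly_J_star_clean st"
  shows "\<exists>e u. e*e = e \<and> st e = e \<and> u \<in> jacobson \<and> a = e + u \<and> a * e = e * a"
  using assms unfolding strongly_J_star_clean_def projection_def by blast

lemma clean_idem_proj:
  fixes st :: "'a::ring_1 \<Rightarrow> 'a"
  assumes "strongly_J_star_clean st" "f*f = f"
  shows "st f = f"
proof -
  obtain e u where h: "e*e = e" "st e = e" "u \<in> jacobson" "f = e + u" "f * e = e * f"
    using clean_decomp[OF assms(1), of f] by blast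
  have "f = e" using jac_idem_eq[of f e] h assms(2) by (metis add_diff_cancel_left')
  then show ?thesis using h by simp
qed

lemma clean_idem_central:
  fixes st :: "'a::ring_1 \<Rightarrow> 'a" and e x :: 'a
  assumes inv: "is_involution st" and cl: "strongly_J_star_clean st" and e: "e*e = e"
  shows "e*x = x*e"
proof -
  note S = st_basic[OF inv]
  have se: "st e = e" using clean_idem_proj[OF cl e] .
  have e1: "e*(1-e) = 0" "(1-e)*e = 0" using e by (simp_all add: algebra_simps)
  define g where "g = e + e*x*(1-e)"
  have "g*g = g"
  proof -
    define y where "y = e*x*(1-e)"
    have "e*y = y" unfolding y_def by (simp add: mult.assoc[symmetric] e)
    moreover have "y*e = 0" unfolding y_def by (simp add: mult.assoc e1)
    moreover have "y*y = 0" unfolding y_def by (simp add: mult.assoc) (simp add: mult.assoc[symmetric] e1)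
    ultimately show ?thesis unfolding g_def y_def[symmetric] by (simp add: distrib_left distrib_right e)
  qed
  then have "st g = g" using clean_idem_proj[OF cl] by blast
  then have "e + (1-e)*st x*e = e + e*x*(1-e)"
    unfolding g_def using S se by (simp add: mult.assoc)
  then have h1: "(1-e)*st x*e = e*x*(1-e)" by simp
  have "e*((1-e)*st x*e) = 0" by (simp add: mult.assoc[symmetric] e1)
  then have "e*(e*x*(1-e)) = 0" using h1 by simp
  then have A: "e*x*(1-e) = 0" by (simp add: mult.assoc[symmetric] e)
  define g' where "g' = e + (1-e)*x*e"
  have "g'*g' = g'"
  proof -
    define y where "y = (1-e)*x*e"
    have "y*e = y" unfolding y_def by (simp add: mult.assoc e)
    moreover have "e*y = 0" unfolding y_def by (simp add: mult.assoc[symmetric] e1)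
    moreover have "y*y = 0" unfolding y_def by (simp add: mult.assoc) (simp add: mult.assoc[symmetric] e1)
    ultimately show ?thesis unfolding g'_def y_def[symmetric] by (simp add: distrib_left distrib_right e)
  qed
  then have "st g' = g'" using clean_idem_proj[OF cl] by blast
  then have "e + e*st x*(1-e) = e + (1-e)*x*e"
    unfolding g'_def using S se by (simp add: mult.assoc)
  then have h2: "e*st x*(1-e) = (1-e)*x*e" by simp
  have "(e*st x*(1-e))*e = 0" by (simp add: mult.assoc e1)
  then have "(1-e)*x*e*e = 0" using h2 by simp
  then have B: "(1-e)*x*e = 0" by (simp add: mult.assoc e)
  have "e*x*(1-e) = e*x - e*x*e" by (simp add: algebra_simps)
  with A have "e*x - e*x*e = 0" by simp
  then have "e*x = e*x*e" by simp
  moreover have "(1-e)*x*e = x*e - e*x*e" by (simp add: algebra_simps)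
  with B have "x*e - e*x*e = 0" by simp
  then have "x*e = e*x*e" by simp
  ultimately show ?thesis by simp
qed

lemma clean_two:
  fixes st :: "'a::ring_1 \<Rightarrow> 'a"
  assumes "strongly_J_star_clean st"
  shows "(2::'a::ring_1) \<in> jacobson"
proof -
  obtain e u where h: "e*e = e" "u \<in> jacobson" "(-1::'a) = e + u" "(-1) * e = e * (-1)"
    using clean_decomp[OF assms, of "-1"] by blast
  have "u = -1 - e" using h(3) by (simp add: algebra_simps)
  then have eu: "e*u = u*e" by (simp only:) (simp add: algebra_simps)
  have "(-1::'a) - (-1)*(-1) = u - e*u - e*u - u*u"
    unfolding h(3) by (simp add: algebra_simps h(1) eu)
  moreover have "u - e*u - e*u - u*u \<in> jacobson"
    using h(2) jac_diff jac_mult by blast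
  ultimately have "(-2::'a) \<in> jacobson" by simp
  then show ?thesis using jac_neg by fastforce
qed

lemma central_sq:
  fixes c :: "'a::ring_1"
  assumes cen: "\<And>y. c*y = y*c" and J: "c*c \<in> jacobson"
  shows "c \<in> jacobson"
  unfolding jac_char
proof
  fix r
  obtain t where t: "t * (1 - (r*r)*(c*c)) = 1" using jac_linv[OF J] by blast
  have q: "r*c*(r*c) = (r*r)*(c*c)"
    by (simp add: mult.assoc cen[of "r*c"])
  have "(1 + r*c)*(1 - r*c) = 1 - r*c*(r*c)"
    by (simp add: algebra_simps)
  then have "(1 + r*c)*(1 - r*c) = 1 - (r*r)*(c*c)" using q by simp
  then have "(t*(1 + r*c))*(1 - r*c) = 1" using t by (simp add: mult.assoc)
  then show "\<exists>s. s * (1 - r*c) = 1" by blast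
qed


lemma gi_ops:
  "GI a b + GI c d = GI (a+c) (b+d)"
  "GI a b * GI c d = GI (a*c - b*d) (a*d + b*c)"
  "GI a b - GI c d = GI (a-c) (b-d)"
  "- GI a b = GI (-a) (-b)"
  "(1::'a::ring_1 gi) = GI 1 0"
  "(0::'a::ring_1 gi) = GI 0 0"
  by (simp_all add: plus_gi_def times_gi_def minus_gi_def uminus_gi_def one_gi_def zero_gi_def)

lemma gi_star_GI: "gi_star st (GI a b) = GI (st a) (st b)"
  by (simp add: gi_star_def)

lemma gi_invol:
  assumes "is_involution st"
  shows "is_involution (gi_star st)"
proof -
  note S = st_basic[OF assms]
  show ?thesis unfolding is_involution_def
  proof (intro conjI allI)
    fix x y :: "'a gi"
    obtain a b where x: "x = GI a b" by (cases x)
    obtain c d where y: "y = GI c d" by (cases y)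
    show "gi_star st (x + y) = gi_star st x + gi_star st y"
      unfolding x y by (simp add: gi_ops gi_star_GI S)
    show "gi_star st (x * y) = gi_star st y * gi_star st x"
      unfolding x y by (simp add: gi_ops gi_star_GI S add.commute)
  next
    fix x :: "'a gi"
    obtain a b where x: "x = GI a b" by (cases x)
    show "gi_star st (gi_star st x) = x" unfolding x by (simp add: gi_star_GI S)
  qed
qed

lemma gi_linv:
  fixes \<alpha> \<beta> :: "'a::ring_1"
  assumes A: "\<alpha> \<in> jacobson" and B: "\<beta> \<in> jacobson"
  shows "\<exists>w. w * (1 - GI \<alpha> \<beta>) = 1"
proof -
  obtain s0 where s0: "s0 * (1 - 1*\<alpha>) = 1" using jac_linv[OF A] by blast
  define \<gamma> where "\<gamma> = s0 * \<beta>"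
  have G: "\<gamma> \<in> jacobson" unfolding \<gamma>_def using jac_mult[OF B] .
  obtain t where t: "t * (1 - (-\<gamma>)*\<gamma>) = 1" using jac_linv[OF G] by blast
  have 1: "GI s0 0 * (1 - GI \<alpha> \<beta>) = GI 1 (-\<gamma>)"
    using s0 by (simp add: gi_ops \<gamma>_def)
  have 2: "GI 1 \<gamma> * GI 1 (-\<gamma>) = GI (1 + \<gamma>*\<gamma>) 0"
    by (simp add: gi_ops)
  have 3: "GI t 0 * GI (1 + \<gamma>*\<gamma>) 0 = 1"
    using t by (simp add: gi_ops)
  have "(GI t 0 * GI 1 \<gamma> * GI s0 0) * (1 - GI \<alpha> \<beta>) = 1"
    by (simp only: mult.assoc 1) (simp only: mult.assoc[symmetric] 2 3)
  then show ?thesis by blast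
qed

lemma gi_jac:
  fixes \<alpha> \<beta> :: "'a::ring_1"
  assumes A: "\<alpha> \<in> jacobson" and B: "\<beta> \<in> jacobson"
  shows "GI \<alpha> \<beta> \<in> jacobson"
  unfolding jac_char[of "GI \<alpha> \<beta>"]
proof
  fix r :: "'a gi"
  obtain s t where r: "r = GI s t" by (cases r)
  have "r * GI \<alpha> \<beta> = GI (s*\<alpha> - t*\<beta>) (s*\<beta> + t*\<alpha>)" unfolding r by (simp add: gi_ops)
  moreover have "s*\<alpha> - t*\<beta> \<in> jacobson" "s*\<beta> + t*\<alpha> \<in> jacobson"
    using A B jac_mult jac_diff jac_add by blast+
  ultimately show "\<exists>w. w * (1 - r * GI \<alpha> \<beta>) = 1" using gi_linv by metis
qed

lemma gi_jac_re:
  fixes x :: "'a::ring_1"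
  assumes "GI x 0 \<in> jacobson"
  shows "x \<in> jacobson"
  unfolding jac_char
proof
  fix r
  obtain w where w: "w * (1 - GI r 0 * GI x 0) = 1" using jac_linv[OF assms] by blast
  obtain s t where ws: "w = GI s t" by (cases w)
  have "GI s t * GI (1 - r*x) 0 = GI 1 0" using w unfolding ws by (simp add: gi_ops)
  then have "s * (1 - r*x) = 1" by (simp add: gi_ops)
  then show "\<exists>s. s * (1 - r*x) = 1" by blast
qed

definition gconj :: "'a::ring_1 gi \<Rightarrow> 'a gi" where "gconj x = GI (re x) (- im x)"

lemma gconj_GI: "gconj (GI a b) = GI a (-b)" by (simp add: gconj_def)

lemma gconj_mult: "gconj (x * y) = gconj x * gconj y"
  by (cases x, cases y) (simp add: gconj_GI gi_ops)
lemma gconj_diff: "gconj (x - y) = gconj x - gconj y"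
  by (cases x, cases y) (simp add: gconj_GI gi_ops)
lemma gconj_one: "gconj 1 = 1"
  by (simp add: gconj_GI gi_ops)
lemma gconj_gconj: "gconj (gconj x) = x"
  by (cases x) (simp add: gconj_GI)

lemma gconj_jac:
  assumes "(x::'a::ring_1 gi) \<in> jacobson"
  shows "gconj x \<in> jacobson"
  unfolding jac_char
proof
  fix r
  obtain s where s: "s * (1 - gconj r * x) = 1" using jac_linv[OF assms] by blast
  have "gconj (s * (1 - gconj r * x)) = 1" using s gconj_one by simp
  then have "gconj s * (1 - r * gconj x) = 1"
    by (simp add: gconj_mult gconj_diff gconj_one gconj_gconj)
  then show "\<exists>s. s * (1 - r * gconj x) = 1" by blast
qed


lemma dir1:
  fixes st :: "'a::ring_1 \<Rightarrow> 'a"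
  assumes inv: "is_involution st" and cl: "strongly_J_star_clean (gi_star st)"
  shows "strongly_J_star_clean st"
  unfolding strongly_J_star_clean_def projection_def
proof
  fix a :: 'a
  have ginv: "is_involution (gi_star st)" using gi_invol[OF inv] .
  obtain e u where h: "e*e = e" "gi_star st e = e" "u \<in> jacobson" "GI a 0 = e + u"
      "GI a 0 * e = e * GI a 0"
    using clean_decomp[OF cl, of "GI a 0"] by blast
  have cen: "\<And>y. e*y = y*e" using clean_idem_central[OF ginv cl h(1)] by blast
  have ce: "gconj e * gconj e = gconj e" using h(1) by (metis gconj_mult)
  have "gconj (GI a 0) = GI a 0" by (simp add: gconj_GI)
  then have "GI a 0 = gconj e + gconj u" using h(4)
    by (metis add_diff_cancel_left' diff_add_cancel gconj_diff)
  then have "e - gconj e = gconj u - u" using h(4) by (simp add: algebra_simps)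
  moreover have "gconj u - u \<in> jacobson" using h(3) gconj_jac jac_diff by blast
  ultimately have "e = gconj e" using jac_idem_eq[OF h(1) ce cen] by simp
  obtain p q where e: "e = GI p q" by (cases e)
  have qq: "q = - q" using \<open>e = gconj e\<close> unfolding e by (simp add: gconj_GI)
  have pq: "p*q = q*p"
  proof -
    have "e * GI q 0 = GI q 0 * e" using cen by blast
    then show ?thesis unfolding e by (simp add: gi_ops)
  qed
  have ap: "a*p = p*a" using h(5) unfolding e by (simp add: gi_ops)
  have ee: "p*p - q*q = p" "p*q + q*p = q" using h(1) unfolding e by (simp_all add: gi_ops)
  have "q = p*(q + q)" using ee(2) pq by (simp add: distrib_left)
  moreover have "q + q = 0" using qq by (metis add.right_inverse)
  ultimately have q0: "q = 0" by simp
  have pp: "p*p = p" using ee(1) q0 by simp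
  have sp: "st p = p" using h(2) unfolding e by (simp add: gi_star_GI)
  have "u = GI a 0 - e" using h(4) by simp
  then have "u = GI (a - p) 0" unfolding e q0 by (simp add: gi_ops)
  then have "a - p \<in> jacobson" using h(3) gi_jac_re by blast
  moreover have "a = p + (a - p)" by simp
  ultimately show "\<exists>e u. (e * e = e \<and> st e = e) \<and> u \<in> jacobson \<and> a = e + u \<and> a * e = e * a"
    using pp sp ap by blast
qed

lemma dir2:
  fixes st :: "'a::ring_1 \<Rightarrow> 'a"
  assumes inv: "is_involution st" and cl: "strongly_J_star_clean st"
  shows "strongly_J_star_clean (gi_star st)"
  unfolding strongly_J_star_clean_def projection_def
proof
  fix x :: "'a gi"
  obtain a b where x: "x = GI a b" by (cases x)
  obtain e u where h: "e*e = e" "st e = e" "u \<in> jacobson" "a + b = e + u"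
    using clean_decomp[OF cl, of "a+b"] by blast
  have cen: "\<And>y. e*y = y*e" using clean_idem_central[OF inv cl h(1)] by blast
  define c :: "'a gi" where "c = GI (-1) 1"
  have cc: "\<And>y. c*y = y*c"
  proof -
    fix y :: "'a gi" obtain s t where "y = GI s t" by (cases y)
    then show "c*y = y*c" unfolding c_def by (simp add: gi_ops algebra_simps)
  qed
  have two: "(-2::'a) \<in> jacobson" using clean_two[OF cl] jac_neg by blast
  have "c*c = GI 0 (-2)" unfolding c_def by (simp add: gi_ops)
  then have "c*c \<in> jacobson" using gi_jac[OF jac_zero two] by simp
  then have cJ: "c \<in> jacobson" using central_sq cc by blast
  have U: "x - GI e 0 = GI u 0 + GI b 0 * c"
  proof -
    have "a - e = u - b" using h(4) by (simp add: algebra_simps)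
    then show ?thesis unfolding x c_def by (simp add: gi_ops)
  qed
  have "GI u 0 + GI b 0 * c \<in> jacobson"
    using gi_jac[OF h(3) jac_zero] jac_mult[OF cJ] jac_add by blast
  then have UJ: "x - GI e 0 \<in> jacobson" using U by simp
  have P1: "GI e 0 * GI e 0 = GI e 0" using h(1) by (simp add: gi_ops)
  have P2: "gi_star st (GI e 0) = GI e 0" using h(2) st_basic(1)[OF inv] by (simp add: gi_star_GI)
  have C: "x * GI e 0 = GI e 0 * x" unfolding x using cen by (simp add: gi_ops)
  have "x = GI e 0 + (x - GI e 0)" by simp
  then show "\<exists>E U. (E * E = E \<and> gi_star st E = E) \<and> U \<in> jacobson \<and> x = E + U \<and> x * E = E * x"
    using P1 P2 UJ C by blast
qed

theorem proposition4p2: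
  fixes st :: "'a::ring_1 \<Rightarrow> 'a"
  assumes "is_involution st"
  shows "strongly_J_star_clean (gi_star st) \<longleftrightarrow> strongly_J_star_clean st"
  using dir1[OF assms] dir2[OF assms] by blast

end
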